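(* If $\pi\in\mathcal A_n$ and $\sigma\in\mathcal A_m$, then $\pi[\sigma]\in\mathcal A_{n+m-1}$.
   Context: $\mathcal A_{n}$ is the set of permutations $w\in S_{n}$ (one-line notation $w_1\cdots w_n$) avoiding all six vincular patterns below, where $w$ contains - $\underline{32}\,\underline{41}$ if there are $i,j$ with $i+2\le j\le n-1$ and $w_{j+1}<w_{i+1}<w_i<w_j$; - $\underline{14}\,\underline{23}$ if there are such $i,j$ with $w_i<w_j<w_{j+1}<w_{i+1}$; - $\underline{41}\,\underline{32}$ if there are such $i,j$ with $w_{i+1}<w_{j+1}<w_j<w_i$; - $\underline{23}\,\underline{14}$ if there are such $i,j$ with $w_j<w_i<w_{i+1}<w_{j+1}$; - $\underline{23}\,\underline{1}$ if there is $i$ with $i+1\le n-1$ and $w_n<w_i<w_{i+1}$; - $\underline{1}\,\underline{32}$ if there is $j$ with $2\le j\le n-1$ and $w_1<w_{j+1}<w_j$. Inflation at $1$: for $\pi\in S_n$ with $\pi_r=1$ and $\sigma=\sigma_1\cdots\sigma_m\in S_m$, $\pi[\sigma]\in S_{n+m-1}$ is the permutation obtained by replacing the entry $1$ of $\pi$ by the block $\sigma_1\cdots\sigma_m$ and adding $m-1$ to every other entry: $\pi[\sigma]=(\pi_1+m-1)\cdots(\pi_{r-1}+m-1)\,\sigma_1\cdots\sigma_m\,(\pi_{r+1}+m-1)\cdots(\pi_n+m-1)$. E.g. $213[1342]=513426$. *)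

theory Defs
  imports Main
begin

(* Permutations of {1..n} in one-line notation, as lists w = [w_1,...,w_n].
   List index k (0-based) corresponds to position k+1 (1-based). *)
definition is_perm :: "nat \<Rightarrow> nat list \<Rightarrow> bool" where
  "is_perm n w \<longleftrightarrow> length w = n \<and> distinct w \<and> set w = {1..n}"

(* vincular pattern containment; indices are 0-based: a = i-1, b = j-1 *)
definition contains_3241 :: "nat list \<Rightarrow> bool" where
  "contains_3241 w \<longleftrightarrow> (\<exists>a b. a + 2 \<le> b \<and> b + 1 < length w \<and>
      w!(b+1) < w!(a+1) \<and> w!(a+1) < w!a \<and> w!a < w!b)"

definition contains_1423 :: "nat list \<Rightarrow> bool" where
  "contains_1423 w \<longleftrightarrow> (\<exists>a b. a + 2 \<le> b \<and> b + 1 < length w \<and>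
      w!a < w!b \<and> w!b < w!(b+1) \<and> w!(b+1) < w!(a+1))"

definition contains_4132 :: "nat list \<Rightarrow> bool" where
  "contains_4132 w \<longleftrightarrow> (\<exists>a b. a + 2 \<le> b \<and> b + 1 < length w \<and>
      w!(a+1) < w!(b+1) \<and> w!(b+1) < w!b \<and> w!b < w!a)"

definition contains_2314 :: "nat list \<Rightarrow> bool" where
  "contains_2314 w \<longleftrightarrow> (\<exists>a b. a + 2 \<le> b \<and> b + 1 < length w \<and>
      w!b < w!a \<and> w!a < w!(a+1) \<and> w!(a+1) < w!(b+1))"

(* 23-1 : i with i+1 <= n-1 (1-based), w_n < w_i < w_{i+1} *)
definition contains_231 :: "nat list \<Rightarrow> bool" where
  "contains_231 w \<longleftrightarrow> (\<exists>a. a + 2 < length w \<and>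
      w!(length w - 1) < w!a \<and> w!a < w!(a+1))"

(* 1-32 : j with 2 <= j <= n-1 (1-based), w_1 < w_{j+1} < w_j *)
definition contains_132 :: "nat list \<Rightarrow> bool" where
  "contains_132 w \<longleftrightarrow> (\<exists>b. 1 \<le> b \<and> b + 1 < length w \<and>
      w!0 < w!(b+1) \<and> w!(b+1) < w!b)"

definition A_set :: "nat \<Rightarrow> nat list set" where
  "A_set n = {w. is_perm n w \<and> \<not> contains_3241 w \<and> \<not> contains_1423 w \<and>
      \<not> contains_4132 w \<and> \<not> contains_2314 w \<and> \<not> contains_231 w \<and> \<not> contains_132 w}"

definition inflate1 :: "nat list \<Rightarrow> nat list \<Rightarrow> nat list" where
  "inflate1 pi sigma = concat (map (\<lambda>x. if x = 1 then sigma else [x + length sigma - 1]) pi)"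

lemma "inflate1 [2,1,3] [1,3,4,2] = [5,1,3,4,2,6]"
  by (simp add: inflate1_def)

end

theory Submission
  imports Defs
begin

locale infl =
  fixes xs ys sigma :: "nat list"
  assumes permpi: "is_perm (length xs + 1 + length ys) (xs @ 1 # ys)"
    and permsig: "is_perm (length sigma) sigma"
    and mpos: "1 \<le> length sigma"
begin

definition "p = length xs"
definition "m = length sigma"
definition "pi = xs @ 1 # ys"
definition "n = length xs + 1 + length ys"
definition "g x = x + m - 1"
definition "w = map g xs @ sigma @ map g ys"
definition "L = length xs + length sigma + length ys"
definition "B i \<longleftrightarrow> p \<le> i \<and> i < p + m"
definition "f i = (if i < p then i else if i < p + m then p else i + 1 - m)"

lemma lenw: "length w = L" by (simp add: w_def L_def)
lemma lenpi: "length pi = n" by (simp add: pi_def n_def)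

lemma w_out: "i < L \<Longrightarrow> \<not> B i \<Longrightarrow> w!i = pi!(f i) + m - 1"
  using mpos
  by (auto simp: w_def pi_def f_def B_def p_def m_def L_def g_def nth_append not_less
      Suc_diff_le add.commute)

lemma w_in: "B i \<Longrightarrow> w!i = sigma!(i-p)"
  by (auto simp: w_def B_def p_def m_def nth_append)

lemma pi_in: "B i \<Longrightarrow> pi!(f i) = 1"
  by (auto simp: pi_def B_def p_def m_def f_def nth_append)

lemma f_lt: "i < L \<Longrightarrow> f i < n"
  using mpos by (auto simp: f_def L_def n_def p_def m_def)

lemma f_p: "\<not> B i \<Longrightarrow> f i \<noteq> p"
  using mpos by (auto simp: f_def B_def p_def m_def)

lemma pi_ge2: "i < n \<Longrightarrow> i \<noteq> p \<Longrightarrow> 2 \<le> pi!i"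
proof -
  assume a: "i < n" "i \<noteq> p"
  have d: "distinct pi" and s: "set pi = {1..n}" using permpi by (auto simp: is_perm_def pi_def n_def)
  have "pi!p = 1" by (simp add: pi_def p_def)
  moreover have "p < n" by (simp add: p_def n_def)
  ultimately have "pi!i \<noteq> 1" using a d lenpi by (metis nth_eq_iff_index_eq)
  moreover have "pi!i \<in> {1..n}" using a s lenpi by (metis nth_mem)
  ultimately show ?thesis by auto
qed

lemma sig_le: "k < m \<Longrightarrow> sigma!k \<le> m"
  using permsig by (metis atLeastAtMost_iff is_perm_def m_def nth_mem)

lemma out_big: "i < L \<Longrightarrow> \<not> B i \<Longrightarrow> m < w!i"
proof -
  assume a: "i < L" "\<not> B i"
  have "2 \<le> pi!(f i)" using pi_ge2[OF f_lt[OF a(1)] f_p[OF a(2)]] .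
  then show ?thesis using w_out[OF a] mpos by (simp add: m_def)
qed

lemma in_small: "B i \<Longrightarrow> w!i \<le> m"
  using w_in sig_le by (auto simp: B_def)

lemma val: "i < L \<Longrightarrow> j < L \<Longrightarrow> B i \<Longrightarrow> \<not> B j \<Longrightarrow> w!i < w!j"
  using out_big in_small by (meson le_less_trans)

lemma ordf: "i < L \<Longrightarrow> j < L \<Longrightarrow> \<not> (B i \<and> B j) \<Longrightarrow> (w!i < w!j \<longleftrightarrow> pi!(f i) < pi!(f j))"
proof -
  assume a: "i < L" "j < L" "\<not> (B i \<and> B j)"
  have m1: "1 \<le> m" using mpos by (simp add: m_def)
  show ?thesis
  proof (cases "B i")
    case True
    then have "\<not> B j" using a by auto
    then show ?thesis using val[OF a(1,2) True] pi_in[OF True] pi_ge2[OF f_lt[OF a(2)] f_p] by simp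
  next
    case False
    note F = False
    show ?thesis
    proof (cases "B j")
      case True
      then show ?thesis using val[OF a(2,1) True F] pi_in[OF True] pi_ge2[OF f_lt[OF a(1)] f_p[OF F]] by simp
    next
      case False
      then show ?thesis using w_out[OF a(1) F] w_out[OF a(2) False] m1 by arith
    qed
  qed
qed

lemma ordB: "B i \<Longrightarrow> B j \<Longrightarrow> (w!i < w!j \<longleftrightarrow> sigma!(i-p) < sigma!(j-p))"
  by (simp add: w_in)

lemma f_suc: "\<not> (B i \<and> B (i+1)) \<Longrightarrow> f (i+1) = f i + 1"
  using mpos by (auto simp: f_def B_def p_def m_def)

lemma f_strict: "i < j \<Longrightarrow> \<not> (B i \<and> B j) \<Longrightarrow> f i < f j"
  using mpos by (auto simp: f_def B_def p_def m_def)

lemma B_int: "B i \<Longrightarrow> B k \<Longrightarrow> i \<le> j \<Longrightarrow> j \<le> k \<Longrightarrow> B j"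
  by (auto simp: B_def)

lemma B_lt: "B i \<Longrightarrow> i < L"
  by (auto simp: B_def L_def p_def m_def)


lemma down: "i < L \<Longrightarrow> j < L \<Longrightarrow> B i \<Longrightarrow> w!j < w!i \<Longrightarrow> B j"
  using val by (meson less_asym)

lemma no3241: assumes "\<not> contains_3241 pi" "\<not> contains_3241 sigma" shows "\<not> contains_3241 w"
proof
  assume "contains_3241 w"
  then obtain a b where H: "a + 2 \<le> b" "b + 1 < L" "w!(b+1) < w!(a+1)" "w!(a+1) < w!a" "w!a < w!b"
    unfolding contains_3241_def lenw by blast
  have L: "a < L" "a+1 < L" "b < L" using H by auto
  show False
  proof (cases "B a \<and> B (a+1) \<and> B b \<and> B (b+1)")
    case True
    have ap: "p \<le> a" "p \<le> b" "b + 1 < p + m" using True by (auto simp: B_def)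
    have e: "w!a = sigma!(a-p)" "w!(a+1) = sigma!(a-p+1)" "w!b = sigma!(b-p)" "w!(b+1) = sigma!(b-p+1)"
      using True ap w_in by (simp_all add: Suc_diff_le)
    have "a - p + 2 \<le> b - p" "b - p + 1 < length sigma" using ap H(1) by (auto simp: m_def)
    then have "contains_3241 sigma" unfolding contains_3241_def using H e
      by (intro exI[of _ "a-p"] exI[of _ "b-p"]) simp
    then show False using assms by simp
  next
    case False
    have bb: "\<not> B b"
    proof
      assume b: "B b"
      have "B a" using down[OF L(3) L(1) b H(5)] .
      moreover have "B (a+1)" using down[OF L(1) L(2) \<open>B a\<close> H(4)] .
      moreover have "B (b+1)" using down[OF L(2) H(2) \<open>B (a+1)\<close> H(3)] .
      ultimately show False using False b by blast
    qed
    have ba1: "\<not> B (a+1)"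
    proof
      assume b: "B (a+1)"
      have "B (b+1)" using down[OF L(2) H(2) b H(3)] .
      then have "B b" using B_int[OF b] H(1) by simp
      then show False using bb by simp
    qed
    have ba: "\<not> B a"
    proof
      assume b: "B a"
      have "B (a+1)" using down[OF L(1) L(2) b H(4)] .
      then show False using ba1 by simp
    qed
    note nb = ba ba1 bb
    have fs: "f (a+1) = f a + 1" "f (b+1) = f b + 1" "f (a+1) < f b" "f (b+1) < n"
      using f_suc[of a] f_suc[of b] f_strict[of "a+1" b] f_lt[of "b+1"] nb H by auto
    have o: "pi!(f (b+1)) < pi!(f (a+1))" "pi!(f (a+1)) < pi!(f a)" "pi!(f a) < pi!(f b)"
      using ordf[of "b+1" "a+1"] ordf[of "a+1" a] ordf[of a b] H L nb by auto
    have "f a + 2 \<le> f b" "f b + 1 < length pi" using fs lenpi by auto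
    then have "contains_3241 pi" unfolding contains_3241_def using o fs
      by (intro exI[of _ "f a"] exI[of _ "f b"]) simp
    then show False using assms by simp
  qed
qed


lemma no1423: assumes "\<not> contains_1423 pi" "\<not> contains_1423 sigma" shows "\<not> contains_1423 w"
proof
  assume "contains_1423 w"
  then obtain a b where H: "a + 2 \<le> b" "b + 1 < L" "w!a < w!b" "w!b < w!(b+1)" "w!(b+1) < w!(a+1)"
    unfolding contains_1423_def lenw by blast
  have L: "a < L" "a+1 < L" "b < L" using H by auto
  show False
  proof (cases "B a \<and> B (a+1) \<and> B b \<and> B (b+1)")
    case True
    have ap: "p \<le> a" "p \<le> b" "b + 1 < p + m" using True by (auto simp: B_def)
    have e: "w!a = sigma!(a-p)" "w!(a+1) = sigma!(a-p+1)" "w!b = sigma!(b-p)" "w!(b+1) = sigma!(b-p+1)"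
      using True ap w_in by (simp_all add: Suc_diff_le)
    have "a - p + 2 \<le> b - p" "b - p + 1 < length sigma" using ap H(1) by (auto simp: m_def)
    then have "contains_1423 sigma" unfolding contains_1423_def using H e
      by (intro exI[of _ "a-p"] exI[of _ "b-p"]) simp
    then show False using assms by simp
  next
    case False
    have ba1: "\<not> B (a+1)"
    proof
      assume b: "B (a+1)"
      have "B (b+1)" using down[OF L(2) H(2) b H(5)] .
      moreover have "B b" using down[OF H(2) L(3) \<open>B (b+1)\<close> H(4)] .
      moreover have "B a" using down[OF L(3) L(1) \<open>B b\<close> H(3)] .
      ultimately show False using False b by blast
    qed
    have bb: "\<not> B b"
    proof
      assume b: "B b"
      have "B a" using down[OF L(3) L(1) b H(3)] .
      then have "B (a+1)" using B_int[OF _ b] H(1) by simp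
      then show False using ba1 by simp
    qed
    have bb1: "\<not> B (b+1)"
    proof
      assume b: "B (b+1)"
      have "B b" using down[OF H(2) L(3) b H(4)] .
      then show False using bb by simp
    qed
    have fs: "f (a+1) = f a + 1" "f (b+1) = f b + 1" "f (a+1) < f b" "f (b+1) < n"
      using f_suc[of a] f_suc[of b] f_strict[of "a+1" b] f_lt[of "b+1"] ba1 bb bb1 H by auto
    have o: "pi!(f a) < pi!(f b)" "pi!(f b) < pi!(f (b+1))" "pi!(f (b+1)) < pi!(f (a+1))"
      using ordf[of a b] ordf[of b "b+1"] ordf[of "b+1" "a+1"] H L ba1 bb bb1 by auto
    have "f a + 2 \<le> f b" "f b + 1 < length pi" using fs lenpi by auto
    then have "contains_1423 pi" unfolding contains_1423_def using o fs
      by (intro exI[of _ "f a"] exI[of _ "f b"]) simp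
    then show False using assms by simp
  qed
qed

lemma no4132: assumes "\<not> contains_4132 pi" "\<not> contains_4132 sigma" "\<not> contains_132 sigma"
  shows "\<not> contains_4132 w"
proof
  assume "contains_4132 w"
  then obtain a b where H: "a + 2 \<le> b" "b + 1 < L" "w!(a+1) < w!(b+1)" "w!(b+1) < w!b" "w!b < w!a"
    unfolding contains_4132_def lenw by blast
  have L: "a < L" "a+1 < L" "b < L" using H by auto
  show False
  proof (cases "B b")
    case Bb: True
    have Bb1: "B (b+1)" using down[OF L(3) H(2) Bb H(4)] .
    have Ba1: "B (a+1)" using down[OF H(2) L(2) Bb1 H(3)] .
    show False
    proof (cases "B a")
      case True
      have ap: "p \<le> a" "p \<le> b" "b + 1 < p + m" using True Bb Bb1 by (auto simp: B_def)
      have e: "w!a = sigma!(a-p)" "w!(a+1) = sigma!(a-p+1)" "w!b = sigma!(b-p)" "w!(b+1) = sigma!(b-p+1)"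
        using True Bb Bb1 Ba1 ap w_in by (simp_all add: Suc_diff_le)
      have "a - p + 2 \<le> b - p" "b - p + 1 < length sigma" using ap H(1) by (auto simp: m_def)
      then have "contains_4132 sigma" unfolding contains_4132_def using H e
        by (intro exI[of _ "a-p"] exI[of _ "b-p"]) simp
      then show False using assms by simp
    next
      case False
      have pa: "p = a + 1" using False Ba1 by (auto simp: B_def)
      have ap: "p \<le> b" "b + 1 < p + m" using Bb Bb1 by (auto simp: B_def)
      have e1: "w!(a+1) = sigma!0" using w_in[OF Ba1] pa by simp
      have e2: "w!b = sigma!(b-p)" using w_in[OF Bb] .
      have e3: "w!(b+1) = sigma!(b-p+1)" using w_in[OF Bb1] ap(1) by (simp add: Suc_diff_le)
      note e = e1 e2 e3
      have "1 \<le> b - p" "b - p + 1 < length sigma" using ap H(1) pa by (auto simp: m_def)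
      then have "contains_132 sigma" unfolding contains_132_def using H e
        by (intro exI[of _ "b-p"]) simp
      then show False using assms by simp
    qed
  next
    case bb: False
    have bb1: "\<not> B (b+1)"
    proof
      assume b: "B (b+1)"
      have "B (a+1)" using down[OF H(2) L(2) b H(3)] .
      then have "B b" using B_int[OF _ b] H(1) by simp
      then show False using bb by simp
    qed
    have ba: "\<not> B a"
    proof
      assume b: "B a"
      have "B b" using down[OF L(1) L(3) b H(5)] .
      then show False using bb by simp
    qed
    have fs: "f (a+1) = f a + 1" "f (b+1) = f b + 1" "f (a+1) < f b" "f (b+1) < n"
      using f_suc[of a] f_suc[of b] f_strict[of "a+1" b] f_lt[of "b+1"] ba bb bb1 H by auto
    have o: "pi!(f (a+1)) < pi!(f (b+1))" "pi!(f (b+1)) < pi!(f b)" "pi!(f b) < pi!(f a)"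
      using ordf[of "a+1" "b+1"] ordf[of "b+1" b] ordf[of b a] H L ba bb bb1 by auto
    have "f a + 2 \<le> f b" "f b + 1 < length pi" using fs lenpi by auto
    then have "contains_4132 pi" unfolding contains_4132_def using o fs
      by (intro exI[of _ "f a"] exI[of _ "f b"]) simp
    then show False using assms by simp
  qed
qed

lemma no2314: assumes "\<not> contains_2314 pi" "\<not> contains_2314 sigma" "\<not> contains_231 sigma"
  shows "\<not> contains_2314 w"
proof
  assume "contains_2314 w"
  then obtain a b where H: "a + 2 \<le> b" "b + 1 < L" "w!b < w!a" "w!a < w!(a+1)" "w!(a+1) < w!(b+1)"
    unfolding contains_2314_def lenw by blast
  have L: "a < L" "a+1 < L" "b < L" using H by auto
  show False
  proof (cases "B a")
    case Ba: True
    have Bb: "B b" using down[OF L(1) L(3) Ba H(3)] .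
    have Ba1: "B (a+1)" using B_int[OF Ba Bb] H(1) by simp
    show False
    proof (cases "B (b+1)")
      case True
      have ap: "p \<le> a" "p \<le> b" "b + 1 < p + m" using True Ba Bb by (auto simp: B_def)
      have e: "w!a = sigma!(a-p)" "w!(a+1) = sigma!(a-p+1)" "w!b = sigma!(b-p)" "w!(b+1) = sigma!(b-p+1)"
        using True Bb Ba Ba1 ap w_in by (simp_all add: Suc_diff_le)
      have "a - p + 2 \<le> b - p" "b - p + 1 < length sigma" using ap H(1) by (auto simp: m_def)
      then have "contains_2314 sigma" unfolding contains_2314_def using H e
        by (intro exI[of _ "a-p"] exI[of _ "b-p"]) simp
      then show False using assms by simp
    next
      case False
      have pb: "b = p + m - 1" "p \<le> a" using False Bb Ba by (auto simp: B_def)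
      have e: "w!a = sigma!(a-p)" "w!(a+1) = sigma!(a-p+1)" "w!b = sigma!(length sigma - 1)"
        using Bb Ba Ba1 pb w_in by (simp_all add: Suc_diff_le m_def)
      have "a - p + 2 < length sigma" using pb H(1) by (auto simp: m_def)
      then have "contains_231 sigma" unfolding contains_231_def using H e
        by (intro exI[of _ "a-p"]) simp
      then show False using assms by simp
    qed
  next
    case ba: False
    have ba1: "\<not> B (a+1)"
    proof
      assume b: "B (a+1)"
      have "B a" using down[OF L(2) L(1) b H(4)] .
      then show False using ba by simp
    qed
    have bb1: "\<not> B (b+1)"
    proof
      assume b: "B (b+1)"
      have "B (a+1)" using down[OF H(2) L(2) b H(5)] .
      then show False using ba1 by simp
    qed
    have fs: "f (a+1) = f a + 1" "f (b+1) = f b + 1" "f (a+1) < f b" "f (b+1) < n"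
      using f_suc[of a] f_suc[of b] f_strict[of "a+1" b] f_lt[of "b+1"] ba ba1 bb1 H by auto
    have o: "pi!(f b) < pi!(f a)" "pi!(f a) < pi!(f (a+1))" "pi!(f (a+1)) < pi!(f (b+1))"
      using ordf[of b a] ordf[of a "a+1"] ordf[of "a+1" "b+1"] H L ba ba1 bb1 by auto
    have "f a + 2 \<le> f b" "f b + 1 < length pi" using fs lenpi by auto
    then have "contains_2314 pi" unfolding contains_2314_def using o fs
      by (intro exI[of _ "f a"] exI[of _ "f b"]) simp
    then show False using assms by simp
  qed
qed

lemma f_last: "f (L - 1) = n - 1"
  unfolding f_def L_def n_def p_def m_def using mpos by (cases ys) auto

lemma B_last: "B (L - 1) \<Longrightarrow> L - 1 = p + m - 1"
  unfolding B_def L_def p_def m_def using mpos by linarith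

lemma no231: assumes "\<not> contains_231 pi" "\<not> contains_231 sigma" shows "\<not> contains_231 w"
proof
  assume "contains_231 w"
  then obtain a where H: "a + 2 < L" "w!(L-1) < w!a" "w!a < w!(a+1)"
    unfolding contains_231_def lenw by blast
  have L: "a < L" "a+1 < L" "L - 1 < L" using H by auto
  show False
  proof (cases "B a")
    case Ba: True
    have Bl: "B (L-1)" using down[OF L(1) L(3) Ba H(2)] .
    have Ba1: "B (a+1)" using B_int[OF Ba Bl] H(1) by simp
    have pb: "L - 1 = p + m - 1" "p \<le> a" using B_last[OF Bl] Ba by (auto simp: B_def)
    have e: "w!a = sigma!(a-p)" "w!(a+1) = sigma!(a-p+1)" "w!(L-1) = sigma!(length sigma - 1)"
      using Bl Ba Ba1 pb w_in by (simp_all add: Suc_diff_le m_def)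
    have "a - p + 2 < length sigma" using pb H(1) by (auto simp: m_def)
    then have "contains_231 sigma" unfolding contains_231_def using H e
      by (intro exI[of _ "a-p"]) simp
    then show False using assms by simp
  next
    case ba: False
    have ba1: "\<not> B (a+1)"
    proof
      assume b: "B (a+1)"
      have "B a" using down[OF L(2) L(1) b H(3)] .
      then show False using ba by simp
    qed
    have fs: "f (a+1) = f a + 1" "f (a+1) < f (L-1)"
      using f_suc[of a] f_strict[of "a+1" "L-1"] ba ba1 H by auto
    have o: "pi!(f (L-1)) < pi!(f a)" "pi!(f a) < pi!(f (a+1))"
      using ordf[of "L-1" a] ordf[of a "a+1"] H L ba ba1 by auto
    have "f a + 2 < length pi" "pi!(length pi - 1) = pi!(f (L-1))" using fs lenpi f_last by auto
    then have "contains_231 pi" unfolding contains_231_def using o fs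
      by (intro exI[of _ "f a"]) simp
    then show False using assms by simp
  qed
qed

lemma no132: assumes "\<not> contains_132 pi" "\<not> contains_132 sigma" shows "\<not> contains_132 w"
proof
  assume "contains_132 w"
  then obtain b where H: "1 \<le> b" "b + 1 < L" "w!0 < w!(b+1)" "w!(b+1) < w!b"
    unfolding contains_132_def lenw by blast
  have L: "0 < L" "b < L" using H by auto
  show False
  proof (cases "B b")
    case Bb: True
    have Bb1: "B (b+1)" using down[OF L(2) H(2) Bb H(4)] .
    have B0: "B 0" using down[OF H(2) L(1) Bb1 H(3)] .
    have pb: "p = 0" "b + 1 < m" using B0 Bb1 by (auto simp: B_def)
    have e: "w!0 = sigma!0" "w!b = sigma!b" "w!(b+1) = sigma!(b+1)"
      using B0 Bb Bb1 pb w_in by simp_all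
    then have "contains_132 sigma" unfolding contains_132_def using H e pb
      by (intro exI[of _ "b"]) (simp add: m_def)
    then show False using assms by simp
  next
    case bb: False
    have bb1: "\<not> B (b+1)"
    proof
      assume b: "B (b+1)"
      have "B 0" using down[OF H(2) L(1) b H(3)] .
      then have "B b" using B_int[OF _ b] by simp
      then show False using bb by simp
    qed
    have fs: "f (b+1) = f b + 1" "f 0 < f b" "f (b+1) < n" "f 0 = 0"
      using f_suc[of b] f_strict[of 0 b] f_lt[of "b+1"] bb bb1 H mpos by (auto simp: f_def m_def)
    have o: "pi!(f 0) < pi!(f (b+1))" "pi!(f (b+1)) < pi!(f b)"
      using ordf[of 0 "b+1"] ordf[of "b+1" b] H L bb bb1 by auto
    have "1 \<le> f b" "f b + 1 < length pi" using fs lenpi by auto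
    then have "contains_132 pi" unfolding contains_132_def using o fs
      by (intro exI[of _ "f b"]) simp
    then show False using assms by simp
  qed
qed


lemma perm_w: "is_perm (n + m - 1) w"
proof -
  have d: "distinct pi" and s: "set pi = {1..n}" using permpi by (auto simp: is_perm_def pi_def n_def)
  have ds: "distinct sigma" and ss: "set sigma = {1..m}" using permsig by (auto simp: is_perm_def m_def)
  have m1: "1 \<le> m" using mpos by (simp add: m_def)
  have n1: "1 \<notin> set xs" "1 \<notin> set ys" "set xs \<inter> set ys = {}" "distinct xs" "distinct ys"
    using d by (auto simp: pi_def)
  have xs2: "\<And>x. x \<in> set xs \<Longrightarrow> 2 \<le> x \<and> x \<le> n"
  proof -
    fix x assume "x \<in> set xs"
    then have "x \<in> set pi" "x \<noteq> 1" using n1 by (auto simp: pi_def)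
    then show "2 \<le> x \<and> x \<le> n" using s by auto
  qed
  have ys2: "\<And>x. x \<in> set ys \<Longrightarrow> 2 \<le> x \<and> x \<le> n"
  proof -
    fix x assume "x \<in> set ys"
    then have "x \<in> set pi" "x \<noteq> 1" using n1 by (auto simp: pi_def)
    then show "2 \<le> x \<and> x \<le> n" using s by auto
  qed
  have gi: "\<And>x y. g x = g y \<Longrightarrow> x = y" unfolding g_def using m1 by simp
  have inj: "inj g" using gi by (simp add: inj_def)
  have gb: "\<And>x. 2 \<le> x \<Longrightarrow> m < g x" unfolding g_def using m1 by simp
  have len: "length w = n + m - 1" using lenw by (simp add: L_def n_def m_def)
  have dw: "distinct w"
  proof -
    have a1: "distinct (map g xs)" "distinct (map g ys)" using n1 inj by (simp_all add: distinct_map inj_on_def inj_def)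
    have a2: "set (map g xs) \<inter> set (map g ys) = {}" using n1(3) gi by auto
    have a3: "set sigma \<inter> set (map g xs) = {}"
    proof (rule ccontr)
      assume "set sigma \<inter> set (map g xs) \<noteq> {}"
      then obtain x where "x \<in> set xs" "g x \<in> set sigma" by auto
      then show False using xs2 gb ss by fastforce
    qed
    have a4: "set sigma \<inter> set (map g ys) = {}"
    proof (rule ccontr)
      assume "set sigma \<inter> set (map g ys) \<noteq> {}"
      then obtain x where "x \<in> set ys" "g x \<in> set sigma" by auto
      then show False using ys2 gb ss by fastforce
    qed
    show ?thesis unfolding w_def using a1 a2 a3 a4 ds by (auto simp: distinct_append)
  qed
  have sub: "set w \<subseteq> {1..n + m - 1}"
  proof
    fix y assume "y \<in> set w"
    then consider "y \<in> set sigma" | x where "x \<in> set xs \<union> set ys" "y = g x" by (auto simp: w_def)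
    then show "y \<in> {1..n + m - 1}"
    proof cases
      case 1 then show ?thesis using ss by (auto simp: n_def)
    next
      case (2 x)
      then have "2 \<le> x" "x \<le> n" using xs2 ys2 by blast+
      then show ?thesis using 2(2) m1 unfolding g_def by auto
    qed
  qed
  have "card (set w) = n + m - 1" using dw len distinct_card by metis
  then have "set w = {1..n + m - 1}" using card_subset_eq[OF _ sub] by simp
  then show ?thesis using len dw by (simp add: is_perm_def)
qed
end

lemma concat_single: "\<forall>x\<in>set xs. x \<noteq> 1 \<Longrightarrow>
  concat (map (\<lambda>x. if x = 1 then s else [x + length s - 1]) xs) = map (\<lambda>x. x + length s - 1) xs"
  by (induction xs) auto

theorem mainTheorem13:
  fixes n m :: nat and pi sigma :: "nat list"
  assumes "1 \<le> n" and "1 \<le> m" and "pi \<in> A_set n" and "sigma \<in> A_set m"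
  shows "inflate1 pi sigma \<in> A_set (n + m - 1)"
proof -
  have pp: "is_perm n pi" and sp: "is_perm m sigma" using assms(3,4) by (auto simp: A_set_def)
  have "1 \<in> set pi" using pp assms(1) by (auto simp: is_perm_def)
  then obtain xs ys where pe: "pi = xs @ 1 # ys" by (meson split_list)
  have nl: "n = length xs + 1 + length ys" using pp pe by (simp add: is_perm_def)
  have ml: "m = length sigma" using sp by (simp add: is_perm_def)
  have dd: "\<forall>x\<in>set xs. x \<noteq> 1" "\<forall>x\<in>set ys. x \<noteq> 1" using pp pe by (auto simp: is_perm_def)
  interpret I: infl xs ys sigma
    using pp sp assms(2) pe nl ml by unfold_locales auto
  have e1: "concat (map (\<lambda>x. if x = 1 then sigma else [x + length sigma - 1]) xs) = map I.g xs"
    unfolding concat_single[OF dd(1)] by (simp add: I.g_def I.m_def)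
  have e2: "concat (map (\<lambda>x. if x = 1 then sigma else [x + length sigma - 1]) ys) = map I.g ys"
    unfolding concat_single[OF dd(2)] by (simp add: I.g_def I.m_def)
  have eq: "inflate1 pi sigma = I.w"
    unfolding inflate1_def pe I.w_def using e1 e2 by simp
  have pin: "I.pi = pi" "I.n = n" "I.m = m" using pe nl ml by (simp_all add: I.pi_def I.n_def I.m_def)
  show ?thesis unfolding eq A_set_def
    using I.perm_w I.no3241 I.no1423 I.no4132 I.no2314 I.no231 I.no132 assms(3,4) pin
    by (auto simp: A_set_def)
qed

end
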